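(* For every integer $n\ge 3$: $\chi_{ei}(C_n)=1$ if $n=3$; $\chi_{ei}(C_n)=2$ if $n\ge 4$ and $n$ is even; $\chi_{ei}(C_n)=3$ if $n\ge 4$ and $n$ is odd.
   Context: All graphs are finite and simple. $C_n$ is the cycle on $n$ vertices. A path $P_4$ in $G$ is a sequence $uxyv$ of four distinct vertices with $ux,xy,yv\in E(G)$; $u,v$ are its end vertices. An $e$-injective $k$-coloring of $G$ is a function $f:V(G)\to\{1,\dots,k\}$ with $f(u)\ne f(v)$ whenever $u,v$ are the end vertices of some path $P_4$ in $G$; $\chi_{ei}(G)$ is the least such $k$. *)

theory Defs
  imports Main
begin

text \<open>A finite simple graph is given by a vertex set V and a symmetric,
irreflexive adjacency relation E (only its restriction to V matters).\<close>

definition cycle_V :: "nat \<Rightarrow> nat set" where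
  "cycle_V n = {0..<n}"

definition cycle_E :: "nat \<Rightarrow> nat \<Rightarrow> nat \<Rightarrow> bool" where
  "cycle_E n u v \<longleftrightarrow> u \<in> cycle_V n \<and> v \<in> cycle_V n \<and> u \<noteq> v \<and>
      (v = (u + 1) mod n \<or> u = (v + 1) mod n)"

definition P4_ends :: "'a set \<Rightarrow> ('a \<Rightarrow> 'a \<Rightarrow> bool) \<Rightarrow> 'a \<Rightarrow> 'a \<Rightarrow> bool" where
  "P4_ends V E u v \<longleftrightarrow> (\<exists>x y. distinct [u, x, y, v] \<and> {u, x, y, v} \<subseteq> V \<and>
      E u x \<and> E x y \<and> E y v)"

definition e_injective_coloring ::
  "'a set \<Rightarrow> ('a \<Rightarrow> 'a \<Rightarrow> bool) \<Rightarrow> nat \<Rightarrow> ('a \<Rightarrow> nat) \<Rightarrow> bool" where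
  "e_injective_coloring V E k f \<longleftrightarrow> f ` V \<subseteq> {1..k} \<and>
      (\<forall>u v. P4_ends V E u v \<longrightarrow> f u \<noteq> f v)"

definition chi_ei :: "'a set \<Rightarrow> ('a \<Rightarrow> 'a \<Rightarrow> bool) \<Rightarrow> nat" where
  "chi_ei V E = (LEAST k. \<exists>f. e_injective_coloring V E k f)"

end

theory Submission
  imports Defs
begin


lemma cE: assumes "n \<ge> 3" shows "cycle_E n u v \<longleftrightarrow> u<n \<and> v<n \<and> (v = u+1 \<or> u = v+1 \<or> (u=n-1 \<and> v=0) \<or> (v=n-1 \<and> u=0))"
proof -
  have m: "\<And>a. a < n \<Longrightarrow> Suc a mod n = (if Suc a = n then 0 else Suc a)" by auto
  show ?thesis unfolding cycle_E_def cycle_V_def using assms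
    by (cases "u < n"; cases "v < n"; simp add: m; auto)
qed

definition wrap :: "nat \<Rightarrow> nat \<Rightarrow> nat" where "wrap n a = (if a < n then a else a - n)"

lemma p4: assumes "n \<ge> 4" "i < n"
  shows "P4_ends (cycle_V n) (cycle_E n) i (wrap n (i+3))"
  unfolding P4_ends_def
  apply (rule exI[of _ "wrap n (i+1)"], rule exI[of _ "wrap n (i+2)"])
  using assms by (auto simp: cE wrap_def cycle_V_def)

lemma ends_even: assumes "n \<ge> 4" "even n" "P4_ends (cycle_V n) (cycle_E n) u v"
  shows "even u \<longleftrightarrow> odd v"
  using assms unfolding P4_ends_def
  by (auto simp: cE) presburger+

lemma ends_odd: assumes "n \<ge> 7" "odd n" "P4_ends (cycle_V n) (cycle_E n) u v"
  and "(if u \<ge> n-3 then 3 else u mod 2 + 1) = (if v \<ge> n-3 then 3 else v mod 2 + 1::nat)"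
  shows False
  using assms unfolding P4_ends_def
  by (auto simp: cE split: if_splits) presburger+


lemma no_p4_3: "\<not> P4_ends (cycle_V 3) (cycle_E 3) u v"
  unfolding P4_ends_def by (auto simp: cE)

lemma ends5: assumes "P4_ends (cycle_V 5) (cycle_E 5) u v"
  shows "[1,2,2,3,1::nat] ! u \<noteq> [1,2,2,3,1] ! v"
  using assms unfolding P4_ends_def
  by (auto simp: cE less_Suc_eq numeral_eq_Suc)

lemma wrap_mod: "n \<ge> 3 \<Longrightarrow> j < n \<Longrightarrow> wrap n (j+3) = (j+3) mod n"
  unfolding wrap_def by (auto simp: le_mod_geq)

lemma odd_lb:
  assumes "n \<ge> 4" "odd n" "e_injective_coloring (cycle_V n) (cycle_E n) k f" "k \<le> 2"
  shows False
proof -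
  have rng: "\<And>i. i < n \<Longrightarrow> f i \<in> {1,2}" using assms(3,4)
    unfolding e_injective_coloring_def cycle_V_def by fastforce
  have ne: "\<And>i. i < n \<Longrightarrow> f i \<noteq> f (wrap n (i+3))" using assms(3) p4[OF assms(1)]
    unfolding e_injective_coloring_def by blast
  define g where "g k = f (3*k mod n)" for k
  have step: "g (Suc k) = 3 - g k" for k
  proof -
    have j: "3*k mod n < n" using assms(1) by simp
    have e: "3 * Suc k mod n = wrap n (3*k mod n + 3)"
      using wrap_mod[OF _ j] assms(1) by (simp add: mod_add_left_eq add.commute) (metis mod_add_right_eq)
    have w0: "\<And>j. j < n \<Longrightarrow> wrap n (j + 3) < n" using assms(1) by (auto simp: wrap_def)
    have w: "wrap n (3*k mod n + 3) < n" using w0[OF j] .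
    show ?thesis using ne[OF j] rng[OF j] rng[OF w] e
      unfolding g_def by (auto simp: wrap_def)
  qed
  have g0: "g 0 \<in> {1,2}" using rng[of 0] assms(1) unfolding g_def by simp
  have gk: "g k = (if even k then g 0 else 3 - g 0)" for k
    by (induction k) (use g0 step in auto)
  have "g n = g 0" unfolding g_def by simp
  then show False using gk[of n] assms(2) g0 by auto
qed

lemma lb1:
  assumes "n \<ge> 4" "e_injective_coloring (cycle_V n) (cycle_E n) k f" "k \<le> 1"
  shows False
proof -
  have "P4_ends (cycle_V n) (cycle_E n) 0 3" using p4[of n 0] assms(1) by (simp add: wrap_def)
  moreover have "f 0 \<in> {1..k}" "f 3 \<in> {1..k}" using assms(1,2)
    unfolding e_injective_coloring_def cycle_V_def by (auto simp: image_subset_iff)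
  then have "f 0 = f 3" using assms(3) by auto
  ultimately show False using assms(2) unfolding e_injective_coloring_def by blast
qed

lemma lb0:
  assumes "n \<ge> 1" "e_injective_coloring (cycle_V n) (cycle_E n) 0 f"
  shows False
  using assms unfolding e_injective_coloring_def cycle_V_def by auto

lemma chi_eq:
  assumes "\<exists>f. e_injective_coloring V E k f" "\<And>j f. j < k \<Longrightarrow> \<not> e_injective_coloring V E j f"
  shows "chi_ei V E = k"
  unfolding chi_ei_def
  by (rule Least_equality) (use assms in \<open>auto simp: not_less[symmetric]\<close>)

theorem proposition3p2:
  fixes n :: nat
  assumes "n \<ge> 3"
  shows "(n = 3 \<longrightarrow> chi_ei (cycle_V n) (cycle_E n) = 1) \<and>
         (n \<ge> 4 \<and> even n \<longrightarrow> chi_ei (cycle_V n) (cycle_E n) = 2) \<and>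
         (n \<ge> 4 \<and> odd n \<longrightarrow> chi_ei (cycle_V n) (cycle_E n) = 3)"
proof (intro conjI impI)
  assume n3: "n = 3"
  show "chi_ei (cycle_V n) (cycle_E n) = 1"
  proof (rule chi_eq)
    show "\<exists>f. e_injective_coloring (cycle_V n) (cycle_E n) 1 f"
      by (rule exI[of _ "\<lambda>_. 1"]) (auto simp: e_injective_coloring_def n3 no_p4_3)
    show "\<And>j f. j < 1 \<Longrightarrow> \<not> e_injective_coloring (cycle_V n) (cycle_E n) j f"
      using lb0[of n] n3 by auto
  qed
next
  assume h: "n \<ge> 4 \<and> even n"
  show "chi_ei (cycle_V n) (cycle_E n) = 2"
  proof (rule chi_eq)
    show "\<exists>f. e_injective_coloring (cycle_V n) (cycle_E n) 2 f"
      apply (rule exI[of _ "\<lambda>i. i mod 2 + 1"])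
      unfolding e_injective_coloring_def using h ends_even[of n]
      by (auto simp: mod2_eq_if)
    show "\<And>j f. j < 2 \<Longrightarrow> \<not> e_injective_coloring (cycle_V n) (cycle_E n) j f"
      using lb1[of n] h by fastforce
  qed
next
  assume h: "n \<ge> 4 \<and> odd n"
  show "chi_ei (cycle_V n) (cycle_E n) = 3"
  proof (rule chi_eq)
    show "\<exists>f. e_injective_coloring (cycle_V n) (cycle_E n) 3 f"
    proof (cases "n = 5")
      case True
      show ?thesis
        apply (rule exI[of _ "\<lambda>i. [1,2,2,3,1::nat] ! i"])
        unfolding e_injective_coloring_def using ends5
        by (auto simp: True cycle_V_def less_Suc_eq numeral_eq_Suc)
    next
      case False
      then have "n \<ge> 7" using h by presburger
      show ?thesis
        apply (intro exI[of _ "\<lambda>u. if u \<ge> n-3 then 3 else u mod 2 + 1"])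
        unfolding e_injective_coloring_def
      proof (intro conjI allI impI)
        show "(\<lambda>u. if u \<ge> n-3 then 3 else u mod 2 + 1) ` cycle_V n \<subseteq> {1..3::nat}"
          by (auto simp: mod2_eq_if)
        fix u v assume "P4_ends (cycle_V n) (cycle_E n) u v"
        then show "(if u \<ge> n-3 then 3 else u mod 2 + 1) \<noteq> (if v \<ge> n-3 then 3 else v mod 2 + (1::nat))"
          using ends_odd[of n u v] h \<open>n \<ge> 7\<close> by blast
      qed
    qed
    show "\<And>j f. j < 3 \<Longrightarrow> \<not> e_injective_coloring (cycle_V n) (cycle_E n) j f"
      using odd_lb[of n] h by fastforce
  qed
qed

end
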